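(* Let $n\ge3$ and $2\le s\le n-1$. For every $I\subseteq\{1,\dots,n\}$ with $|I|=s$ and $n\in I$, the groups $U_I(K)$ and $E_\infty(\mathbb S_{CI})$ are contained in $E_\infty(\mathbb S_{n-1})$ (viewed inside $(1+\mathfrak p_n)^*=\mathrm{GL}_\infty(\mathbb S_{n-1})$). Consequently $\widetilde{\mathcal E}_{n,s}\subseteq E_\infty(\mathbb S_{n-1})$.
   Context: $K$ is a field, $\mathbb N=\{0,1,\dots\}$. $\mathbb S_n$: $K$-algebra generated by $x_1,\dots,x_n,y_1,\dots,y_n$ with relations $y_ix_i=1$, $[x_i,y_j]=[x_i,x_j]=[y_i,y_j]=0$ ($i\ne j$). $E_{st}(i):=x_i^sy_i^t-x_i^{s+1}y_i^{t+1}$, $e_i:=E_{00}(i)$, $e_I:=\prod_{i\in I}e_i$, $E_{\alpha\beta}(I):=\prod_{i\in I}E_{\alpha_i\beta_i}(i)$ for $\alpha,\beta\in\mathbb N^I$. $\mathfrak p_n$ is the ideal of $\mathbb S_n$ generated by $e_n$ and $(1+\mathfrak p_n)^*$ the group of units in $1+\mathfrak p_n$. $\mathbb S_{n-1}$ = subalgebra generated by $x_k,y_k$, $k<n$; $\mathrm{GL}_\infty(\mathbb S_{n-1})$ is identified with $(1+\mathfrak p_n)^*$ via $(a_{kl})\mapsto1+\sum(a_{kl}-\delta_{kl})E_{kl}(n)$; $E_\infty(\mathbb S_{n-1})$ is the subgroup generated by elementary matrices, i.e. by the elements $1+aE_{kl}(n)$, $a\in\mathbb S_{n-1}$, $k\ne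 l$. $\mu_I(\lambda):=\lambda e_I+1-e_I$, $U_I(K):=\{\mu_I(\lambda):\lambda\in K^*\}$; $CI$ is the complement of $I$, $\mathbb S_{CI}$ the subalgebra generated by $x_k,y_k$, $k\in CI$ ($=K$ if $CI=\emptyset$); $E_\infty(\mathbb S_{CI})$ the subgroup of $\mathbb S_n^*$ generated by $1+aE_{\alpha\beta}(I)$, $a\in\mathbb S_{CI}$, $\alpha\ne\beta\in\mathbb N^I$. $\widetilde{\mathcal E}_{n,s}$ is the set of products, in a fixed order over all $I$ with $|I|=s$ and $n\in I$, of elements of $U_I(K)E_\infty(\mathbb S_{CI})$. *)

theory Defs
  imports Main
begin

text \<open>Concrete model of the Jacobian algebra S_n: the faithful representation of
  S_n by linear operators on the space of all functions N^N -> K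
  (x_i is the shift raising the i-th exponent, y_i its left inverse).\<close>

type_synonym 'a sop = "((nat \<Rightarrow> nat) \<Rightarrow> 'a) \<Rightarrow> ((nat \<Rightarrow> nat) \<Rightarrow> 'a)"

definition Xop :: "nat \<Rightarrow> 'a::field sop" where
  "Xop i = (\<lambda>f \<alpha>. if 1 \<le> \<alpha> i then f (\<alpha>(i := \<alpha> i - 1)) else 0)"

definition Yop :: "nat \<Rightarrow> 'a::field sop" where
  "Yop i = (\<lambda>f \<alpha>. f (\<alpha>(i := \<alpha> i + 1)))"

definition opadd :: "'a::field sop \<Rightarrow> 'a sop \<Rightarrow> 'a sop" where
  "opadd a b = (\<lambda>f \<alpha>. a f \<alpha> + b f \<alpha>)"

definition opsub :: "'a::field sop \<Rightarrow> 'a sop \<Rightarrow> 'a sop" where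
  "opsub a b = (\<lambda>f \<alpha>. a f \<alpha> - b f \<alpha>)"

definition opsmult :: "'a::field \<Rightarrow> 'a sop \<Rightarrow> 'a sop" where
  "opsmult c a = (\<lambda>f \<alpha>. c * a f \<alpha>)"

inductive_set salg :: "nat set \<Rightarrow> 'a::field sop set" for J where
  one: "id \<in> salg J"
| genx: "k \<in> J \<Longrightarrow> Xop k \<in> salg J"
| geny: "k \<in> J \<Longrightarrow> Yop k \<in> salg J"
| add: "a \<in> salg J \<Longrightarrow> b \<in> salg J \<Longrightarrow> opadd a b \<in> salg J"
| mult: "a \<in> salg J \<Longrightarrow> b \<in> salg J \<Longrightarrow> a \<circ> b \<in> salg J"
| smult: "a \<in> salg J \<Longrightarrow> opsmult c a \<in> salg J"

text \<open>Subgroup of the group of units generated by a set of units (the generators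
  are bijective operators; inv is the functional inverse).\<close>
inductive_set gen_grp :: "'a sop set \<Rightarrow> 'a sop set" for G where
  one: "id \<in> gen_grp G"
| left: "g \<in> G \<Longrightarrow> h \<in> gen_grp G \<Longrightarrow> g \<circ> h \<in> gen_grp G"
| left_inv: "g \<in> G \<Longrightarrow> h \<in> gen_grp G \<Longrightarrow> inv g \<circ> h \<in> gen_grp G"

definition Est :: "nat \<Rightarrow> nat \<Rightarrow> nat \<Rightarrow> 'a::field sop" where
  "Est s t i = opsub ((Xop i ^^ s) \<circ> (Yop i ^^ t)) ((Xop i ^^ Suc s) \<circ> (Yop i ^^ Suc t))"

definition eop :: "nat \<Rightarrow> 'a::field sop" where
  "eop i = Est 0 0 i"

text \<open>Products over a finite index set I (factors commute; taken in increasing order).\<close>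
definition EI :: "(nat \<Rightarrow> nat) \<Rightarrow> (nat \<Rightarrow> nat) \<Rightarrow> nat set \<Rightarrow> 'a::field sop" where
  "EI \<alpha> \<beta> I = foldr (\<circ>) (map (\<lambda>i. Est (\<alpha> i) (\<beta> i) i) (sorted_list_of_set I)) id"

definition eI :: "nat set \<Rightarrow> 'a::field sop" where
  "eI I = foldr (\<circ>) (map (\<lambda>i. eop i) (sorted_list_of_set I)) id"

definition muI :: "nat set \<Rightarrow> 'a::field \<Rightarrow> 'a sop" where
  "muI I c = opadd (opsmult c (eI I)) (opsub id (eI I))"

definition UI :: "nat set \<Rightarrow> 'a::field sop set" where
  "UI I = {muI I c | c. c \<noteq> 0}"

text \<open>E_infinity(S_{n-1}) inside (1+p_n)^*: generated by 1 + a E_{kl}(n), a in S_{n-1}, k <> l.\<close>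
definition Einf_n :: "nat \<Rightarrow> 'a::field sop set" where
  "Einf_n n = gen_grp {opadd id (a \<circ> Est k l n) | a k l. a \<in> salg {1..<n} \<and> k \<noteq> l}"

text \<open>E_infinity(S_{CI}): generated by 1 + a E_{alpha beta}(I), a in S_{CI}, alpha <> beta in N^I.\<close>
definition Einf_C :: "nat \<Rightarrow> nat set \<Rightarrow> 'a::field sop set" where
  "Einf_C n I = gen_grp {opadd id (a \<circ> EI \<alpha> \<beta> I) | a \<alpha> \<beta>.
      a \<in> salg ({1..n} - I) \<and> (\<exists>i\<in>I. \<alpha> i \<noteq> \<beta> i)}"

text \<open>tilde E_{n,s} for a fixed ordering Is of the sets I (|I| = s, n in I):
  products, in the order of Is, of elements of U_I(K) E_infinity(S_{CI}).\<close>
definition tildeE :: "nat \<Rightarrow> nat set list \<Rightarrow> 'a::field sop set" where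
  "tildeE n Is = {foldr (\<circ>) (map g Is) id | g.
      \<forall>I\<in>set Is. g I \<in> {u \<circ> v | u v. u \<in> UI I \<and> v \<in> Einf_C n I}}"

end

theory Submission
  imports Defs
begin

lemma Xpow_apply: "(Xop i ^^ s) f \<alpha> = (if s \<le> \<alpha> i then f (\<alpha>(i := \<alpha> i - s)) else (0::'a::field))"
proof (induction s arbitrary: \<alpha>)
  case 0 then show ?case by simp
next
  case (Suc s) then show ?case by (auto simp: Xop_def fun_upd_def intro!: arg_cong[where f=f])
qed

lemma Ypow_apply: "(Yop i ^^ t) f \<alpha> = (f (\<alpha>(i := \<alpha> i + t)) :: 'a::field)"
proof (induction t arbitrary: \<alpha>)
  case 0 then show ?case by simp
next
  case (Suc t) then show ?case by (auto simp: Yop_def fun_upd_def intro!: arg_cong[where f=f])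
qed

lemma Est_apply: "Est s t i f \<alpha> = (if \<alpha> i = s then f (\<alpha>(i := t)) else (0::'a::field))"
  unfolding Est_def opsub_def comp_def
  by (simp del: funpow.simps add: Xpow_apply Ypow_apply; auto simp: fun_upd_def intro!: arg_cong[where f=f] ext)

lemma EI_list: "distinct L \<Longrightarrow> foldr (\<circ>) (map (\<lambda>i. Est (\<alpha> i) (\<beta> i) i) L) id f \<gamma> =
  (if \<forall>j\<in>set L. \<gamma> j = \<alpha> j then f (\<lambda>j. if j \<in> set L then \<beta> j else \<gamma> j) else (0::'a::field))"
proof (induction L arbitrary: \<gamma>)
  case Nil then show ?case by simp
next
  case (Cons a L)
  have e: "(\<lambda>j. if j \<in> set L then \<beta> j else (\<gamma>(a := \<beta> a)) j) = (\<lambda>j. if j \<in> set (a#L) then \<beta> j else \<gamma> j)"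
    by auto
  show ?case using Cons by (auto simp: Est_apply e)
qed

lemma EI_apply: "finite I \<Longrightarrow> EI \<alpha> \<beta> I f \<gamma> =
  (if \<forall>j\<in>I. \<gamma> j = \<alpha> j then f (\<lambda>j. if j \<in> I then \<beta> j else \<gamma> j) else (0::'a::field))"
  unfolding EI_def by (simp add: EI_list)

lemma eI_apply: "finite I \<Longrightarrow> eI I f \<gamma> = (if \<forall>j\<in>I. \<gamma> j = 0 then f \<gamma> else (0::'a::field))"
proof -
  assume fin: "finite I"
  have "eI I = (EI (\<lambda>_. 0) (\<lambda>_. 0) I :: 'a sop)"
    unfolding eI_def EI_def eop_def by simp
  moreover have "\<forall>j\<in>I. \<gamma> j = 0 \<Longrightarrow> (\<lambda>j. if j \<in> I then 0 else \<gamma> j) = \<gamma>" by auto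
  ultimately show ?thesis using fin by (simp add: EI_apply)
qed

definition lin :: "'a::field sop \<Rightarrow> bool" where
  "lin T \<longleftrightarrow> (\<forall>f g. T (\<lambda>\<alpha>. f \<alpha> + g \<alpha>) = (\<lambda>\<alpha>. T f \<alpha> + T g \<alpha>)) \<and> (\<forall>c f. T (\<lambda>\<alpha>. c * f \<alpha>) = (\<lambda>\<alpha>. c * T f \<alpha>))"

lemma lin_id: "lin id" by (simp add: lin_def)
lemma lin_comp: "lin a \<Longrightarrow> lin b \<Longrightarrow> lin (a \<circ> b)" by (simp add: lin_def)
lemma lin_opadd: "lin a \<Longrightarrow> lin b \<Longrightarrow> lin (opadd a b)"
  by (simp add: lin_def opadd_def algebra_simps)
lemma lin_opsmult: "lin a \<Longrightarrow> lin (opsmult c a)"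
  by (simp add: lin_def opsmult_def algebra_simps)
lemma lin_opsub: "lin a \<Longrightarrow> lin b \<Longrightarrow> lin (opsub a b)"
  by (simp add: lin_def opsub_def algebra_simps)
lemma lin_X: "lin (Xop i)" by (auto simp: lin_def Xop_def fun_eq_iff)
lemma lin_Y: "lin (Yop i)" by (auto simp: lin_def Yop_def fun_eq_iff)
lemma lin_zero: "lin (\<lambda>f \<alpha>. 0)" by (simp add: lin_def)
lemma lin_Est: "lin (Est s t i)" by (auto simp: lin_def Est_apply fun_eq_iff)
lemma lin_foldr: "(\<And>x. x \<in> set L \<Longrightarrow> lin (g x)) \<Longrightarrow> lin (foldr (\<circ>) (map g L) id)"
  by (induction L) (auto simp: lin_id lin_comp)
lemma lin_EI: "lin (EI \<alpha> \<beta> I)" unfolding EI_def by (rule lin_foldr) (simp add: lin_Est)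
lemma lin_eI: "lin (eI I)" unfolding eI_def eop_def by (rule lin_foldr) (simp add: lin_Est)

lemma salg_lin: "a \<in> salg J \<Longrightarrow> lin a"
  proof (induction rule: salg.induct)
  case one then show ?case using lin_id by (simp add: id_def)
next
  case (mult a b) then show ?case using lin_comp[of a b] by (simp add: comp_def)
qed (auto intro: lin_X lin_Y lin_opadd lin_opsmult)

lemma lin_comp_opadd: "lin T \<Longrightarrow> T \<circ> opadd a b = opadd (T \<circ> a) (T \<circ> b)"
  by (auto simp: lin_def opadd_def fun_eq_iff)
lemma lin_comp_opsmult: "lin T \<Longrightarrow> T \<circ> opsmult c a = opsmult c (T \<circ> a)"
  by (auto simp: lin_def opsmult_def fun_eq_iff)
lemma opadd_comp: "opadd a b \<circ> T = opadd (a \<circ> T) (b \<circ> T)"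
  by (auto simp: opadd_def fun_eq_iff)
lemma opsmult_comp: "opsmult c a \<circ> T = opsmult c (a \<circ> T)"
  by (auto simp: opsmult_def fun_eq_iff)

lemma salg_sub: "a \<in> salg J \<Longrightarrow> b \<in> salg J \<Longrightarrow> opsub a b \<in> salg J"
proof -
  assume "a \<in> salg J" "b \<in> salg J"
  then have "opadd a (opsmult (-1) b) \<in> salg J" by (intro salg.add salg.smult)
  moreover have "opadd a (opsmult (-1) b) = opsub a b"
    by (simp add: opadd_def opsmult_def opsub_def fun_eq_iff)
  ultimately show ?thesis by simp
qed

lemma salg_mono: "a \<in> salg J \<Longrightarrow> J \<subseteq> K \<Longrightarrow> a \<in> salg K"
  by (induction rule: salg.induct) (auto intro: salg.intros)

lemma salg_Xpow: "i \<in> J \<Longrightarrow> (Xop i ^^ s) \<in> salg J"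
  by (induction s) (auto intro: salg.intros)
lemma salg_Ypow: "i \<in> J \<Longrightarrow> (Yop i ^^ s) \<in> salg J"
  by (induction s) (auto intro: salg.intros)
lemma salg_Est: "i \<in> J \<Longrightarrow> Est s t i \<in> salg J"
  unfolding Est_def by (intro salg_sub salg.mult salg_Xpow salg_Ypow)
lemma salg_foldr: "(\<And>x. x \<in> set L \<Longrightarrow> g x \<in> salg J) \<Longrightarrow> foldr (\<circ>) (map g L) id \<in> salg J"
  by (induction L) (auto intro: salg.intros)
lemma salg_EI: "finite I \<Longrightarrow> I \<subseteq> J \<Longrightarrow> EI \<alpha> \<beta> I \<in> salg J"
  unfolding EI_def by (rule salg_foldr) (auto intro: salg_Est)
lemma salg_eI: "finite I \<Longrightarrow> I \<subseteq> J \<Longrightarrow> eI I \<in> salg J"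
  unfolding eI_def eop_def by (rule salg_foldr) (auto intro: salg_Est)

lemma comm_XY: "k \<noteq> j \<Longrightarrow> Xop k \<circ> Xop j = Xop j \<circ> Xop k"
  "k \<noteq> j \<Longrightarrow> Xop k \<circ> Yop j = Yop j \<circ> Xop k"
  "k \<noteq> j \<Longrightarrow> Yop k \<circ> Xop j = Xop j \<circ> Yop k"
  "k \<noteq> j \<Longrightarrow> Yop k \<circ> Yop j = Yop j \<circ> Yop k"
  by (auto simp: Xop_def Yop_def fun_eq_iff fun_upd_twist)

lemma comm_gen_salg:
  assumes "b \<in> salg K" "k \<notin> K" "T = Xop k \<or> T = Yop k"
  shows "T \<circ> b = b \<circ> T"
  using assms(1)
proof (induction rule: salg.induct)
  case one then show ?case by simp
next
  case (genx j) then show ?case using assms comm_XY by (metis)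
next
  case (geny j) then show ?case using assms comm_XY by (metis)
next
  case (add a b)
  have "lin T" using assms(3) lin_X lin_Y by auto
  then show ?case using add by (simp only: lin_comp_opadd opadd_comp)
next
  case (mult a b) then show ?case by (metis comp_assoc)
next
  case (smult a c)
  have "lin T" using assms(3) lin_X lin_Y by auto
  then show ?case using smult by (simp only: lin_comp_opsmult opsmult_comp)
qed

lemma comm_salg:
  assumes "a \<in> salg J" "b \<in> salg K" "J \<inter> K = {}"
  shows "a \<circ> b = b \<circ> a"
  using assms(1)
proof (induction rule: salg.induct)
  case one then show ?case by simp
next
  case (genx k) then show ?case using comm_gen_salg[OF assms(2)] assms(3) by blast
next
  case (geny k) then show ?case using comm_gen_salg[OF assms(2)] assms(3) by blast
next
  case (add a1 a2)
  have "lin b" using assms(2) salg_lin by auto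
  then show ?case using add by (simp only: lin_comp_opadd opadd_comp)
next
  case (mult a1 a2) then show ?case by (metis comp_assoc)
next
  case (smult a c)
  have "lin b" using assms(2) salg_lin by auto
  then show ?case using smult by (simp only: lin_comp_opsmult opsmult_comp)
qed

lemma gen_grp_comp: "g \<in> gen_grp G \<Longrightarrow> h \<in> gen_grp G \<Longrightarrow> g \<circ> h \<in> gen_grp G"
  by (induction rule: gen_grp.induct) (auto simp: comp_assoc intro: gen_grp.intros)

lemma gen_grp_gen: "g \<in> G \<Longrightarrow> g \<in> gen_grp G"
  using gen_grp.left[OF _ gen_grp.one] by fastforce

typedef (overloaded) 'a lop = "{T :: 'a::field sop. lin T}"
  morphisms rep abs
  using lin_id by blast

setup_lifting type_definition_lop

instantiation lop :: (field) ring_1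
begin
lift_definition zero_lop :: "'a lop" is "\<lambda>f \<alpha>. 0" by (rule lin_zero)
lift_definition one_lop :: "'a lop" is id by (rule lin_id)
lift_definition plus_lop :: "'a lop \<Rightarrow> 'a lop \<Rightarrow> 'a lop" is opadd by (rule lin_opadd)
lift_definition minus_lop :: "'a lop \<Rightarrow> 'a lop \<Rightarrow> 'a lop" is opsub by (rule lin_opsub)
lift_definition uminus_lop :: "'a lop \<Rightarrow> 'a lop" is "opsmult (-1)" by (rule lin_opsmult)
lift_definition times_lop :: "'a lop \<Rightarrow> 'a lop \<Rightarrow> 'a lop" is "(\<circ>)" by (rule lin_comp)
instance
proof
  fix a b c :: "'a lop"
  show "a + b + c = a + (b + c)" by transfer (simp add: opadd_def add.assoc)
  show "a + b = b + a" by transfer (simp add: opadd_def add.commute)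
  show "0 + a = a" by transfer (simp add: opadd_def)
  show "- a + a = 0" by transfer (simp add: opadd_def opsmult_def)
  show "a - b = a + - b" by transfer (simp add: opadd_def opsmult_def opsub_def)
  show "a * b * c = a * (b * c)" by transfer (simp add: comp_assoc)
  show "1 * a = a" by transfer simp
  show "a * 1 = a" by transfer simp
  show "(a + b) * c = a * c + b * c" by transfer (simp add: opadd_comp)
  show "a * (b + c) = a * b + a * c" by transfer (simp add: lin_comp_opadd)
  show "(0::'a lop) \<noteq> 1"
  proof transfer
    show "(\<lambda>f \<alpha>. 0::'a) \<noteq> id"
    proof
      assume "(\<lambda>f \<alpha>. 0::'a) = id"
      from fun_cong[OF fun_cong[OF this, of "\<lambda>_. 1"], of undefined] show False by simp
    qed
  qed
qed
end

lemma rep_one: "rep 1 = id" by transfer simp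
lemma rep_add: "rep (a + b) = opadd (rep a) (rep b)" by transfer simp
lemma rep_mult: "rep (a * b) = rep a \<circ> rep b" by transfer simp
lemma rep_uminus: "rep (- a) = opsmult (-1) (rep a)" by transfer simp
lemma rep_minus: "rep (a - b) = opsub (rep a) (rep b)" by transfer simp
lemma rep_zero: "rep 0 = (\<lambda>f \<alpha>. 0)" by transfer simp

lift_definition sc :: "'a::field \<Rightarrow> 'a lop" is "\<lambda>c. opsmult c id" by (rule lin_opsmult[OF lin_id])

lemma rep_abs: "lin a \<Longrightarrow> rep (abs a) = a" by (simp add: abs_inverse)

definition inS :: "nat set \<Rightarrow> 'a::field lop \<Rightarrow> bool" where
  "inS J A \<longleftrightarrow> rep A \<in> salg J"

lemma inS_one: "inS J 1" by (simp add: inS_def rep_one salg.one)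
lemma inS_add: "inS J A \<Longrightarrow> inS J B \<Longrightarrow> inS J (A + B)" by (simp add: inS_def rep_add salg.add)
lemma inS_mult: "inS J A \<Longrightarrow> inS J B \<Longrightarrow> inS J (A * B)" by (simp add: inS_def rep_mult salg.mult)
lemma inS_uminus: "inS J A \<Longrightarrow> inS J (- A)" by (simp add: inS_def rep_uminus salg.smult)
lemma inS_minus: "inS J A \<Longrightarrow> inS J B \<Longrightarrow> inS J (A - B)" by (simp add: inS_def rep_minus salg_sub)
lemma inS_sc: "inS J (sc c)" unfolding inS_def by transfer (intro salg.smult salg.one)
lemma inS_zero: "inS J 0"
proof -
  have "inS J (1 - 1)" by (intro inS_minus inS_one)
  then show ?thesis by simp
qed
lemma inS_mono: "inS J A \<Longrightarrow> J \<subseteq> K \<Longrightarrow> inS K A" by (auto simp: inS_def intro: salg_mono)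

lemma inS_comm: "inS J A \<Longrightarrow> inS K B \<Longrightarrow> J \<inter> K = {} \<Longrightarrow> A * B = B * A"
  unfolding inS_def by (metis comm_salg rep_inject rep_mult)

lemma sc_comm: "sc c * A = A * sc c" by transfer (auto simp: lin_def opsmult_def fun_eq_iff)
lemma sc_mult: "sc c * sc d = sc (c * d)" by transfer (auto simp: opsmult_def fun_eq_iff)
lemma sc_add: "sc c + sc d = sc (c + d)" by transfer (auto simp: opsmult_def opadd_def fun_eq_iff algebra_simps)
lemma sc_one: "sc 1 = 1" by transfer (auto simp: opsmult_def fun_eq_iff)
lemma sc_zero: "sc 0 = 0" by transfer (auto simp: opsmult_def fun_eq_iff)

lift_definition lX :: "nat \<Rightarrow> 'a::field lop" is Xop by (rule lin_X)
lift_definition lY :: "nat \<Rightarrow> 'a::field lop" is Yop by (rule lin_Y)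
lift_definition lE :: "nat \<Rightarrow> nat \<Rightarrow> nat \<Rightarrow> 'a::field lop" is "\<lambda>i k l. Est k l i" by (rule lin_Est)
lift_definition lEI :: "(nat \<Rightarrow> nat) \<Rightarrow> (nat \<Rightarrow> nat) \<Rightarrow> nat set \<Rightarrow> 'a::field lop" is EI by (rule lin_EI)
lift_definition leI :: "nat set \<Rightarrow> 'a::field lop" is eI by (rule lin_eI)

lemma inS_X: "i \<in> J \<Longrightarrow> inS J (lX i)" unfolding inS_def by transfer (rule salg.genx)
lemma inS_Y: "i \<in> J \<Longrightarrow> inS J (lY i)" unfolding inS_def by transfer (rule salg.geny)
lemma inS_E: "i \<in> J \<Longrightarrow> inS J (lE i k l)" unfolding inS_def by transfer (rule salg_Est)
lemma inS_EI: "finite I \<Longrightarrow> I \<subseteq> J \<Longrightarrow> inS J (lEI \<alpha> \<beta> I)" unfolding inS_def by transfer (rule salg_EI)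
lemma inS_eI: "finite I \<Longrightarrow> I \<subseteq> J \<Longrightarrow> inS J (leI I)" unfolding inS_def by transfer (rule salg_eI)

lemma YX: "lY i * lX i = (1 :: 'a::field lop)"
  by transfer (auto simp: Xop_def Yop_def fun_eq_iff)

lemma E00: "lE i 0 0 = 1 - lX i * lY i"
  by transfer (simp add: Est_def opsub_def)

lemma EE: "lE i k l * lE i k' l' = (if l = k' then lE i k l' else 0)"
  by transfer (auto simp: Est_apply fun_eq_iff)

context
  fixes P :: "nat \<Rightarrow> nat \<Rightarrow> 'r::ring_1"
  assumes PP: "\<And>a b c d. P a b * P c d = (if b = c then P a d else 0)"
begin

lemma PPa: "P a b * (P c d * X) = (if b = c then P a d * X else 0)"
  by (simp add: PP flip: mult.assoc)

lemma whitehead: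
  assumes cu: "\<And>a b. P a b * u = u * P a b" and cu': "\<And>a b. P a b * u' = u' * P a b"
    and uu: "u * u' = 1" "u' * u = 1" and kl: "k \<noteq> l"
  shows "(1 + u*P k l)*(1 + (-u')*P l k)*(1 + u*P k l)*(1 + (-1)*P k l)*(1 + 1*P l k)*(1 + (-1)*P k l)
     = 1 + (u - 1)*P k k + (u' - 1)*P l l"
proof -
  have cua: "\<And>a b X. P a b * (u * X) = u * (P a b * X)" by (simp add: cu flip: mult.assoc)
  have cua': "\<And>a b X. P a b * (u' * X) = u' * (P a b * X)" by (simp add: cu' flip: mult.assoc)
  have uua: "\<And>X. u * (u' * X) = X" "\<And>X. u' * (u * X) = X" by (simp_all add: uu flip: mult.assoc)
  show ?thesis using kl by (simp add: algebra_simps PP PPa cua cua' uu uua)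
qed


lemma Mfact:
  assumes cx: "\<And>a b. P a b * x = x * P a b" and cy: "\<And>a b. P a b * y = y * P a b"
    and yx: "y * x = 1" and ab: "a \<noteq> b"
  shows "(1 + (1-x)*P a b)*(1 + (-1)*P b a)*(1 + (1-y)*P a b)*(1 + x*P b a)
     = 1 + (x - 1)*P a a + (1 - x*y)*P a b + (y - 1)*P b b"
proof -
  have cxa: "\<And>a b X. P a b * (x * X) = x * (P a b * X)" by (simp add: cx flip: mult.assoc)
  have cya: "\<And>a b X. P a b * (y * X) = y * (P a b * X)" by (simp add: cy flip: mult.assoc)
  have yxa: "\<And>X. y * (x * X) = X" by (simp add: yx flip: mult.assoc)
  show ?thesis using ab by (simp add: algebra_simps PP PPa cxa cya yx yxa cx cy)
qed

lemma Mifact: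
  assumes cx: "\<And>a b. P a b * x = x * P a b" and cy: "\<And>a b. P a b * y = y * P a b"
    and yx: "y * x = 1" and ab: "a \<noteq> b"
  shows "(1 + (-x)*P b a)*(1 + (y-1)*P a b)*(1 + 1*P b a)*(1 + (x-1)*P a b)
     = 1 + (y - 1)*P a a + (1 - x*y)*P b a + (x - 1)*P b b"
proof -
  have cxa: "\<And>a b X. P a b * (x * X) = x * (P a b * X)" by (simp add: cx flip: mult.assoc)
  have cya: "\<And>a b X. P a b * (y * X) = y * (P a b * X)" by (simp add: cy flip: mult.assoc)
  have yxa: "\<And>X. y * (x * X) = X" by (simp add: yx flip: mult.assoc)
  show ?thesis using ab by (simp add: algebra_simps PP PPa cxa cya yx yxa cx cy)
qed

lemma mainid:
  assumes cx: "\<And>a b. P a b * x = x * P a b" and cy: "\<And>a b. P a b * y = y * P a b"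
    and cu: "\<And>a b. P a b * u = u * P a b" and cu': "\<And>a b. P a b * u' = u' * P a b"
    and ux: "u * x = x * u" and uy: "u * y = y * u" and u'x: "u' * x = x * u'" and u'y: "u' * y = y * u'"
    and uu: "u * u' = 1" "u' * u = 1"
    and yx: "y * x = 1" and ab: "a \<noteq> b" "a \<noteq> m" "b \<noteq> m"
  shows "(1 + (u - 1)*P a a + (u' - 1)*P m m) * (1 + (x - 1)*P a a + (1 - x*y)*P a b + (y - 1)*P b b)
    * (1 + (u' - 1)*P a a + (u - 1)*P m m) * (1 + (y - 1)*P a a + (1 - x*y)*P b a + (x - 1)*P b b)
    = 1 + (u - 1)*(1 - x*y)*P a a"
proof -
  have cxa: "\<And>a b X. P a b * (x * X) = x * (P a b * X)" by (simp add: cx flip: mult.assoc)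
  have cya: "\<And>a b X. P a b * (y * X) = y * (P a b * X)" by (simp add: cy flip: mult.assoc)
  have cua: "\<And>a b X. P a b * (u * X) = u * (P a b * X)" by (simp add: cu flip: mult.assoc)
  have cua': "\<And>a b X. P a b * (u' * X) = u' * (P a b * X)" by (simp add: cu' flip: mult.assoc)
  have uxa: "\<And>X. x * (u * X) = u * (x * X)" "\<And>X. y * (u * X) = u * (y * X)"
     "\<And>X. x * (u' * X) = u' * (x * X)" "\<And>X. y * (u' * X) = u' * (y * X)"
    by (simp_all add: ux uy u'x u'y flip: mult.assoc)
  have yxa: "\<And>X. y * (x * X) = X" by (simp add: yx flip: mult.assoc)
  have uua: "\<And>X. u * (u' * X) = X" "\<And>X. u' * (u * X) = X" by (simp_all add: uu flip: mult.assoc)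
  show ?thesis using ab by (simp add: algebra_simps PP PPa cxa cya cua cua' uxa yx yxa uu uua cx cy cu cu' ux uy u'x u'y)
qed

lemma diagid:
  assumes cB: "\<And>a b. P a b * B = B * P a b" and cV: "\<And>a b. P a b * V = V * P a b"
    and BV: "B * V = B" and VB: "V * B = 0" and km: "k \<noteq> m"
  shows "(1 + B*P m k)*(1 + V*P k m)*(1 + (-B)*P m k)*(1 + (-V)*P k m) = 1 + B*P m m"
proof -
  have cBa: "\<And>a b X. P a b * (B * X) = B * (P a b * X)" by (simp add: cB flip: mult.assoc)
  have cVa: "\<And>a b X. P a b * (V * X) = V * (P a b * X)" by (simp add: cV flip: mult.assoc)
  have BVa: "\<And>X. B * (V * X) = B * X" "\<And>X. V * (B * X) = 0" by (simp_all add: BV VB flip: mult.assoc)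
  have BB: "B * B = 0" by (metis BV VB mult.assoc mult_zero_right)
  have BBa: "\<And>X. B * (B * X) = 0" by (simp add: BB flip: mult.assoc)
  show ?thesis using km by (simp add: algebra_simps PP PPa cBa cVa BV VB BVa BB BBa)
qed

end

lemma rep_lE: "rep (lE i k l) = Est k l i" by (simp add: lE.rep_eq)

lemma gen_in: "inS {1..<n} A \<Longrightarrow> k \<noteq> l \<Longrightarrow> rep (1 + A * lE n k l) \<in> (Einf_n n :: 'a::field sop set)"
  unfolding Einf_n_def
  by (rule gen_grp_gen) (auto simp: rep_add rep_one rep_mult rep_lE inS_def)

lemma prod_in: "rep A \<in> Einf_n n \<Longrightarrow> rep B \<in> Einf_n n \<Longrightarrow> rep (A * B) \<in> (Einf_n n :: 'a::field sop set)"
  unfolding Einf_n_def rep_mult by (rule gen_grp_comp)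

lemma PPn: "lE n a b * lE n c d = (if b = c then lE n a d else (0::'a::field lop))"
  by (rule EE)

lemma commP: "inS {1..<n} A \<Longrightarrow> lE n a b * A = A * lE n a b"
  by (rule inS_comm[OF inS_E[of n "{n}"]]) auto

lemma eI_idem: "finite J \<Longrightarrow> leI J * leI J = (leI J :: 'a::field lop)"
  by transfer (auto simp: eI_apply fun_eq_iff)

lemma UI_in:
  fixes n :: nat and c :: "'a::field"
  assumes I: "I \<subseteq> {1..n}" "card I \<ge> 2" "n \<in> I" and c0: "c \<noteq> 0"
  shows "muI I c \<in> (Einf_n n :: 'a sop set)"
proof -
  have finI: "finite I" using I(1) finite_subset by blast
  obtain i where i: "i \<in> I" "i \<noteq> n"
  proof -
    have "\<not> I \<subseteq> {n}" using I(2) card_mono[of "{n}" I] by (metis One_nat_def card.empty card_insert_disjoint empty_iff finite.intros not_less_eq_eq numeral_2_eq_2 subset_singletonD card_0_eq finI) 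
    then show ?thesis using that by blast
  qed
  have iN: "i \<in> {1..<n}" using i I(1) by auto
  define J where "J = I - {i, n}"
  have finJ: "finite J" using finI J_def by auto
  have JN: "J \<subseteq> {1..<n}" using I(1) i(2) I(3) unfolding J_def by fastforce
  have Ji: "J \<inter> {i} = {}" using J_def by auto
  define x :: "'a lop" where "x = lX i"
  define y :: "'a lop" where "y = lY i"
  define e :: "'a lop" where "e = leI J"
  define u where "u = 1 + sc (c - 1) * e"
  define u' where "u' = 1 + sc (1/c - 1) * e"
  define P :: "nat \<Rightarrow> nat \<Rightarrow> 'a lop" where "P = lE n"
  have PP: "\<And>a b c d. P a b * P c d = (if b = c then P a d else 0)" unfolding P_def by (rule EE)
  have Sx: "inS {1..<n} x" "inS {i} x" using iN by (auto simp: x_def intro: inS_X)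
  have Sy: "inS {1..<n} y" "inS {i} y" using iN by (auto simp: y_def intro: inS_Y)
  have Se: "inS J e" unfolding e_def using finJ by (auto intro: inS_eI)
  have Su: "inS J u" "inS J u'" unfolding u_def u'_def using Se by (auto intro: inS_add inS_mult inS_one inS_sc)
  have Su2: "inS {1..<n} u" "inS {1..<n} u'" using Su JN inS_mono by blast+
  have cP: "\<And>a b A. inS {1..<n} A \<Longrightarrow> P a b * A = A * P a b" unfolding P_def by (rule commP)
  have ux: "u * x = x * u" "u * y = y * u" "u' * x = x * u'" "u' * y = y * u'"
    using inS_comm[OF Su(1) Sx(2) Ji] inS_comm[OF Su(1) Sy(2) Ji]
      inS_comm[OF Su(2) Sx(2) Ji] inS_comm[OF Su(2) Sy(2) Ji] by auto
  have ee: "e * e = e" unfolding e_def using finJ by (rule eI_idem)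
  have sce: "\<And>a. e * sc a = sc a * e" by (simp add: sc_comm)
  have uu0: "\<And>a b. (1 + sc a * e) * (1 + sc b * e) = 1 + sc (a + b + a * b) * e"
  proof -
    fix a b
    have "(1 + sc a * e) * (1 + sc b * e) = 1 + sc a * e + sc b * e + sc a * (e * sc b) * e"
      by (simp add: algebra_simps ee mult.assoc)
    also have "\<dots> = 1 + sc a * e + sc b * e + sc (a * b) * e"
      by (simp add: sce mult.assoc ee flip: sc_mult)
    also have "\<dots> = 1 + sc (a + b + a * b) * e" by (simp add: algebra_simps flip: sc_add)
    finally show "(1 + sc a * e) * (1 + sc b * e) = 1 + sc (a + b + a * b) * e" .
  qed
  have uu: "u * u' = 1" "u' * u = 1"
  proof -
    have "(c - 1) + (1/c - 1) + (c - 1) * (1/c - 1) = 0" "(1/c - 1) + (c - 1) + (1/c - 1) * (c - 1) = 0"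
      using c0 by (simp_all add: field_simps)
    then show "u * u' = 1" "u' * u = 1" unfolding u_def u'_def uu0 by (simp_all add: sc_zero)
  qed
  have yx: "y * x = 1" unfolding x_def y_def by (rule YX)
  have cx: "\<And>a b. P a b * x = x * P a b" "\<And>a b. P a b * y = y * P a b"
     "\<And>a b. P a b * u = u * P a b" "\<And>a b. P a b * u' = u' * P a b"
    using cP Sx Sy Su2 by auto
  have gen: "\<And>A a b. inS {1..<n} A \<Longrightarrow> a \<noteq> b \<Longrightarrow> rep (1 + A * P a b) \<in> Einf_n n"
    unfolding P_def by (rule gen_in)
  have S1: "inS {1..<n} (1::'a lop)" by (rule inS_one)
  have eqD: "(1 + u*P 0 1)*(1 + (-u')*P 1 0)*(1 + u*P 0 1)*(1 + (-1)*P 0 1)*(1 + 1*P 1 0)*(1 + (-1)*P 0 1)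
     = 1 + (u - 1)*P 0 0 + (u' - 1)*P 1 1"
    by (rule whitehead[OF PP cx(3) cx(4) uu]) simp
  have D: "rep (1 + (u - 1)*P 0 0 + (u' - 1)*P 1 1) \<in> Einf_n n"
    unfolding eqD[symmetric]
    by (intro prod_in gen inS_uminus Su2 S1) auto
  have eqDi: "(1 + u'*P 0 1)*(1 + (-u)*P 1 0)*(1 + u'*P 0 1)*(1 + (-1)*P 0 1)*(1 + 1*P 1 0)*(1 + (-1)*P 0 1)
     = 1 + (u' - 1)*P 0 0 + (u - 1)*P 1 1"
    by (rule whitehead[OF PP cx(4) cx(3) uu(2) uu(1)]) simp
  have Di: "rep (1 + (u' - 1)*P 0 0 + (u - 1)*P 1 1) \<in> Einf_n n"
    unfolding eqDi[symmetric]
    by (intro prod_in gen inS_uminus Su2 S1) auto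
  have eqM: "(1 + (1-x)*P 0 2)*(1 + (-1)*P 2 0)*(1 + (1-y)*P 0 2)*(1 + x*P 2 0)
     = 1 + (x - 1)*P 0 0 + (1 - x*y)*P 0 2 + (y - 1)*P 2 2"
    by (rule Mfact[OF PP cx(1) cx(2) yx]) simp
  have M: "rep (1 + (x - 1)*P 0 0 + (1 - x*y)*P 0 2 + (y - 1)*P 2 2) \<in> Einf_n n"
    unfolding eqM[symmetric]
    by (intro prod_in gen inS_uminus inS_minus Sx Sy S1) auto
  have eqMi: "(1 + (-x)*P 2 0)*(1 + (y-1)*P 0 2)*(1 + 1*P 2 0)*(1 + (x-1)*P 0 2)
     = 1 + (y - 1)*P 0 0 + (1 - x*y)*P 2 0 + (x - 1)*P 2 2"
    by (rule Mifact[OF PP cx(1) cx(2) yx]) simp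
  have Mi: "rep (1 + (y - 1)*P 0 0 + (1 - x*y)*P 2 0 + (x - 1)*P 2 2) \<in> Einf_n n"
    unfolding eqMi[symmetric]
    by (intro prod_in gen inS_uminus inS_minus Sx Sy S1) auto
  have eqmain: "(1 + (u - 1)*P 0 0 + (u' - 1)*P 1 1) * (1 + (x - 1)*P 0 0 + (1 - x*y)*P 0 2 + (y - 1)*P 2 2)
    * (1 + (u' - 1)*P 0 0 + (u - 1)*P 1 1) * (1 + (y - 1)*P 0 0 + (1 - x*y)*P 2 0 + (x - 1)*P 2 2)
    = 1 + (u - 1)*(1 - x*y)*P 0 0"
    by (rule mainid[OF PP cx ux uu yx]) simp_all
  have main: "rep (1 + (u - 1)*(1 - x*y)*P 0 0) \<in> Einf_n n"
    unfolding eqmain[symmetric]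
    by (intro prod_in D Di M Mi)
  have eq: "rep (1 + (u - 1)*(1 - x*y)*P 0 0) = muI I c"
  proof -
    have "(u - 1)*(1 - x*y)*P 0 0 = sc (c - 1) * leI J * lE i 0 0 * lE n 0 0"
      by (simp add: u_def e_def P_def x_def y_def E00)
    then have "rep (1 + (u - 1)*(1 - x*y)*P 0 0) = opadd id (opsmult (c - 1) id \<circ> eI J \<circ> Est 0 0 i \<circ> Est 0 0 n)"
      by (simp add: rep_add rep_one rep_mult rep_lE sc.rep_eq leI.rep_eq)
    also have "\<dots> = muI I c"
    proof (rule ext, rule ext)
      fix f :: "(nat \<Rightarrow> nat) \<Rightarrow> 'a" and \<gamma>
      have Ieq: "I = insert i (insert n J)" using J_def i I(3) by auto
      show "opadd id (opsmult (c - 1) id \<circ> eI J \<circ> Est 0 0 i \<circ> Est 0 0 n) f \<gamma> = muI I c f \<gamma>"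
        using i(2) unfolding muI_def opadd_def opsmult_def opsub_def
        by (simp only: eI_apply[OF finI]; auto simp: eI_apply[OF finJ] Est_apply Ieq fun_upd_idem algebra_simps)
    qed
    finally show ?thesis .
  qed
  show ?thesis using main eq by simp
qed

lemma lEI_split0: "finite I' \<Longrightarrow> n \<notin> I' \<Longrightarrow>
  lEI \<alpha> \<beta> (insert n I') = lEI \<alpha> \<beta> I' * (lE n (\<alpha> n) (\<beta> n) :: 'a::field lop)"
proof transfer
  fix I' :: "nat set" and n \<alpha> \<beta>
  assume fin': "finite I'" and nI: "n \<notin> I'"
  have fin: "finite (insert n I')" using fin' by auto
  show "(EI \<alpha> \<beta> (insert n I') :: 'a sop) = EI \<alpha> \<beta> I' \<circ> Est (\<alpha> n) (\<beta> n) n"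
  proof (rule ext, rule ext)
    fix f :: "(nat \<Rightarrow> nat) \<Rightarrow> 'a" and \<gamma>
    define \<delta> where "\<delta> = (\<lambda>j. if j \<in> I' then \<beta> j else \<gamma> j)"
    have d1: "\<delta> n = \<gamma> n" using nI by (simp add: \<delta>_def)
    have d2: "\<delta>(n := \<beta> n) = (\<lambda>j. if j \<in> insert n I' then \<beta> j else \<gamma> j)"
      by (rule ext) (simp add: \<delta>_def)
    have r: "(EI \<alpha> \<beta> I' \<circ> Est (\<alpha> n) (\<beta> n) n) f \<gamma> =
      (if \<forall>j\<in>I'. \<gamma> j = \<alpha> j then (if \<gamma> n = \<alpha> n then f (\<lambda>j. if j \<in> insert n I' then \<beta> j else \<gamma> j) else 0) else 0)"
      by (simp only: comp_apply EI_apply[OF fin'] Est_apply flip: \<delta>_def d1 d2)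
    have l: "EI \<alpha> \<beta> (insert n I') f \<gamma> = (if \<forall>j\<in>insert n I'. \<gamma> j = \<alpha> j then f (\<lambda>j. if j \<in> insert n I' then \<beta> j else \<gamma> j) else 0)"
      by (rule EI_apply[OF fin])
    show "EI \<alpha> \<beta> (insert n I') f \<gamma> = (EI \<alpha> \<beta> I' \<circ> Est (\<alpha> n) (\<beta> n) n) f \<gamma>"
      unfolding l r by simp
  qed
qed

lemma lEI_split: "finite I \<Longrightarrow> n \<in> I \<Longrightarrow>
  lEI \<alpha> \<beta> I = lEI \<alpha> \<beta> (I - {n}) * (lE n (\<alpha> n) (\<beta> n) :: 'a::field lop)"
  using lEI_split0[of "I - {n}" n \<alpha> \<beta>] by (simp add: insert_absorb)

definition ovr :: "nat set \<Rightarrow> (nat \<Rightarrow> nat) \<Rightarrow> (nat \<Rightarrow> nat) \<Rightarrow> (nat \<Rightarrow> nat)" where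
  "ovr I \<beta> \<gamma> = (\<lambda>j. if j \<in> I then \<beta> j else \<gamma> j)"

lemma EI_apply2: "finite I \<Longrightarrow> EI \<alpha> \<beta> I g \<gamma> = (if \<forall>j\<in>I. \<gamma> j = \<alpha> j then g (ovr I \<beta> \<gamma>) else (0::'a::field))"
  unfolding ovr_def by (rule EI_apply)

lemma ovr_in: "j \<in> I \<Longrightarrow> ovr I \<beta> \<gamma> j = \<beta> j" by (simp add: ovr_def)
lemma ovr_ovr: "ovr I \<beta> (ovr I \<beta>' \<gamma>) = ovr I \<beta> \<gamma>" by (simp add: ovr_def fun_eq_iff)

lemma lEI_idr: "finite I \<Longrightarrow> lEI \<alpha> \<beta> I * lEI \<beta> \<beta> I = (lEI \<alpha> \<beta> I :: 'a::field lop)"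
proof transfer
  fix I :: "nat set" and \<alpha> \<beta> :: "nat \<Rightarrow> nat" assume fin: "finite I"
  show "(EI \<alpha> \<beta> I :: 'a sop) \<circ> EI \<beta> \<beta> I = EI \<alpha> \<beta> I"
  proof (rule ext, rule ext)
    fix f :: "(nat \<Rightarrow> nat) \<Rightarrow> 'a" and \<gamma>
    show "(EI \<alpha> \<beta> I \<circ> EI \<beta> \<beta> I) f \<gamma> = EI \<alpha> \<beta> I f \<gamma>"
      by (simp only: comp_apply EI_apply2[OF fin] ovr_in ovr_ovr) (simp add: ovr_in)
  qed
qed

lemma lEI_zero: "finite I \<Longrightarrow> \<exists>j\<in>I. \<alpha> j \<noteq> \<beta> j \<Longrightarrow> lEI \<beta> \<beta> I * lEI \<alpha> \<beta> I = (0 :: 'a::field lop)"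
proof transfer
  fix I :: "nat set" and \<alpha> \<beta> :: "nat \<Rightarrow> nat" assume fin: "finite I" and ne: "\<exists>j\<in>I. \<alpha> j \<noteq> \<beta> j"
  show "(EI \<beta> \<beta> I :: 'a sop) \<circ> EI \<alpha> \<beta> I = (\<lambda>f \<alpha>. 0)"
  proof (rule ext, rule ext)
    fix f :: "(nat \<Rightarrow> nat) \<Rightarrow> 'a" and \<gamma>
    have "\<not> (\<forall>j\<in>I. ovr I \<beta> \<gamma> j = \<alpha> j)" using ne by (metis ovr_in)
    then show "(EI \<beta> \<beta> I \<circ> EI \<alpha> \<beta> I) f \<gamma> = 0"
      by (simp only: comp_apply EI_apply2[OF fin]) simp
  qed
qed

lemma lEI_sq: "finite I \<Longrightarrow> \<exists>j\<in>I. \<alpha> j \<noteq> \<beta> j \<Longrightarrow> lEI \<alpha> \<beta> I * lEI \<alpha> \<beta> I = (0 :: 'a::field lop)"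
proof transfer
  fix I :: "nat set" and \<alpha> \<beta> :: "nat \<Rightarrow> nat" assume fin: "finite I" and ne: "\<exists>j\<in>I. \<alpha> j \<noteq> \<beta> j"
  show "(EI \<alpha> \<beta> I :: 'a sop) \<circ> EI \<alpha> \<beta> I = (\<lambda>f \<alpha>. 0)"
  proof (rule ext, rule ext)
    fix f :: "(nat \<Rightarrow> nat) \<Rightarrow> 'a" and \<gamma>
    have "\<not> (\<forall>j\<in>I. ovr I \<beta> \<gamma> j = \<alpha> j)" using ne by (metis ovr_in)
    then show "(EI \<alpha> \<beta> I \<circ> EI \<alpha> \<beta> I) f \<gamma> = 0"
      by (simp only: comp_apply EI_apply2[OF fin]) simp
  qed
qed

lemma Cgen_in:
  fixes A :: "'a::field lop"
  assumes I: "I \<subseteq> {1..n}" "n \<in> I" and A: "inS ({1..n} - I) A" and ab: "\<exists>j\<in>I. \<alpha> j \<noteq> \<beta> j"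
  shows "rep (1 + A * lEI \<alpha> \<beta> I) \<in> Einf_n n"
proof -
  have finI: "finite I" using I(1) finite_subset by blast
  define I' where "I' = I - {n}"
  have finI': "finite I'" using finI I'_def by auto
  have I'N: "I' \<subseteq> {1..<n}" using I I'_def by auto
  have sub: "{1..n} - I \<subseteq> {1..<n}"
  proof
    fix x assume "x \<in> {1..n} - I"
    then show "x \<in> {1..<n}" using I(2) by (cases "x = n") auto
  qed
  have AN: "inS {1..<n} A" by (rule inS_mono[OF A sub])
  have split: "lEI \<alpha> \<beta> I = lEI \<alpha> \<beta> I' * lE n (\<alpha> n) (\<beta> n)"
    unfolding I'_def using finI I(2) by (rule lEI_split)
  have SE: "inS {1..<n} (lEI \<alpha> \<beta> I')" "inS {1..<n} (lEI \<beta> \<beta> I')"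
    using finI' I'N by (auto intro: inS_EI)
  show ?thesis
  proof (cases "\<alpha> n = \<beta> n")
    case False
    then show ?thesis unfolding split mult.assoc[symmetric]
      by (intro gen_in inS_mult AN SE)
  next
    case True
    define m where "m = \<alpha> n"
    define P :: "nat \<Rightarrow> nat \<Rightarrow> 'a lop" where "P = lE n"
    have PP: "\<And>a b c d. P a b * P c d = (if b = c then P a d else 0)" unfolding P_def by (rule EE)
    define B where "B = A * lEI \<alpha> \<beta> I'"
    define V :: "'a lop" where "V = lEI \<beta> \<beta> I'"
    have SB: "inS {1..<n} B" "inS {1..<n} (-B)" unfolding B_def by (intro inS_mult inS_uminus AN SE)+
    have SV: "inS {1..<n} V" "inS {1..<n} (-V)" unfolding V_def by (intro inS_uminus SE)+
    have cB: "\<And>a b. P a b * B = B * P a b" "\<And>a b. P a b * V = V * P a b"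
      unfolding P_def by (rule commP[OF SB(1)], rule commP[OF SV(1)])
    have BV: "B * V = B" unfolding B_def V_def using finI' by (simp add: mult.assoc lEI_idr)
    have ab': "\<exists>j\<in>I'. \<alpha> j \<noteq> \<beta> j" using ab True I'_def by auto
    have VA: "V * A = A * V"
    proof (rule inS_comm[of I' _ "{1..n} - I"])
      show "inS I' V" unfolding V_def using finI' by (rule inS_EI) simp
      show "inS ({1..n} - I) A" by (rule A)
      show "I' \<inter> ({1..n} - I) = {}" unfolding I'_def by blast
    qed
    have VB: "V * B = 0" unfolding B_def
      by (simp add: mult.assoc[symmetric] VA) (simp add: mult.assoc V_def lEI_zero[OF finI' ab'])
    have eq: "(1 + B*P m (Suc m))*(1 + V*P (Suc m) m)*(1 + (-B)*P m (Suc m))*(1 + (-V)*P (Suc m) m) = 1 + B*P m m"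
      by (rule diagid[OF PP cB BV VB]) simp
    have "1 + A * lEI \<alpha> \<beta> I = 1 + B * P m m"
      unfolding split B_def P_def m_def using True by (simp add: mult.assoc)
    moreover have "rep ((1 + B*P m (Suc m))*(1 + V*P (Suc m) m)*(1 + (-B)*P m (Suc m))*(1 + (-V)*P (Suc m) m)) \<in> Einf_n n"
      unfolding P_def by (intro prod_in gen_in SB SV) auto
    ultimately show ?thesis using eq by simp
  qed
qed

lemma EinfC_sub:
  assumes I: "I \<subseteq> {1..n}" "n \<in> I"
  shows "(Einf_C n I :: 'a::field sop set) \<subseteq> Einf_n n"
proof
  fix g :: "'a sop" assume "g \<in> Einf_C n I"
  then show "g \<in> Einf_n n" unfolding Einf_C_def
  proof (induction rule: gen_grp.induct)
    case one then show ?case unfolding Einf_n_def by (rule gen_grp.one)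
  next
    case (left g h)
    then obtain a \<alpha> \<beta> where g: "g = opadd id (a \<circ> EI \<alpha> \<beta> I)" "a \<in> salg ({1..n} - I)" "\<exists>i\<in>I. \<alpha> i \<noteq> \<beta> i"
      by blast
    have "g = rep (1 + abs a * lEI \<alpha> \<beta> I)"
      using g by (simp add: rep_add rep_one rep_mult rep_abs[OF salg_lin[OF g(2)]] lEI.rep_eq)
    moreover have "rep (1 + abs a * lEI \<alpha> \<beta> I) \<in> Einf_n n"
      using g by (intro Cgen_in I) (auto simp: inS_def rep_abs salg_lin)
    ultimately have "g \<in> Einf_n n" by simp
    then show ?case using left.IH unfolding Einf_n_def by (rule gen_grp_comp)
  next
    case (left_inv g h)
    then obtain a \<alpha> \<beta> where g: "g = opadd id (a \<circ> EI \<alpha> \<beta> I)" "a \<in> salg ({1..n} - I)" "\<exists>i\<in>I. \<alpha> i \<noteq> \<beta> i"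
      by blast
    have finI: "finite I" using I(1) finite_subset by blast
    define A :: "'a lop" where "A = abs a"
    have SA: "inS ({1..n} - I) A" using g(2) by (simp add: A_def inS_def rep_abs salg_lin)
    have SE: "inS I (lEI \<alpha> \<beta> I)" using finI by (auto intro: inS_EI)
    have comm: "lEI \<alpha> \<beta> I * A = A * lEI \<alpha> \<beta> I" by (rule inS_comm[OF SE SA]) auto
    have sq: "(A * lEI \<alpha> \<beta> I) * (A * lEI \<alpha> \<beta> I) = 0"
    proof -
      have "(A * lEI \<alpha> \<beta> I) * (A * lEI \<alpha> \<beta> I) = A * (lEI \<alpha> \<beta> I * A) * lEI \<alpha> \<beta> I"
        by (simp only: mult.assoc)
      also have "\<dots> = A * A * (lEI \<alpha> \<beta> I * lEI \<alpha> \<beta> I)" by (simp only: comm mult.assoc)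
      also have "\<dots> = 0" by (simp add: lEI_sq[OF finI g(3)])
      finally show ?thesis .
    qed
    have gr: "g = rep (1 + A * lEI \<alpha> \<beta> I)"
      using g by (simp add: A_def rep_add rep_one rep_mult rep_abs[OF salg_lin[OF g(2)]] lEI.rep_eq)
    have inv1: "(1 + A * lEI \<alpha> \<beta> I) * (1 + (-A) * lEI \<alpha> \<beta> I) = 1"
      "(1 + (-A) * lEI \<alpha> \<beta> I) * (1 + A * lEI \<alpha> \<beta> I) = 1"
      using sq by (simp_all add: algebra_simps)
    have "inv g = rep (1 + (-A) * lEI \<alpha> \<beta> I)"
      unfolding gr
      by (rule inv_unique_comp) (simp_all only: rep_mult[symmetric] inv1 rep_one)
    moreover have "rep (1 + (-A) * lEI \<alpha> \<beta> I) \<in> Einf_n n"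
      using g by (intro Cgen_in I inS_uminus SA) auto
    ultimately have "inv g \<in> Einf_n n" by simp
    then show ?case using left_inv.IH unfolding Einf_n_def by (rule gen_grp_comp)
  qed
qed

theorem lemma3p2:
  fixes n s :: nat
  assumes "3 \<le> n" and "2 \<le> s" and "s \<le> n - 1"
  shows "(\<forall>I. I \<subseteq> {1..n} \<and> card I = s \<and> n \<in> I \<longrightarrow>
            UI I \<subseteq> (Einf_n n :: 'a::field sop set) \<and> (Einf_C n I :: 'a sop set) \<subseteq> Einf_n n)
       \<and> (\<forall>Is. distinct Is \<and> set Is = {I. I \<subseteq> {1..n} \<and> card I = s \<and> n \<in> I} \<longrightarrow>
            (tildeE n Is :: 'a sop set) \<subseteq> Einf_n n)"
proof -
  have P1: "UI I \<subseteq> (Einf_n n :: 'a::field sop set) \<and> (Einf_C n I :: 'a sop set) \<subseteq> Einf_n n"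
    if I: "I \<subseteq> {1..n}" "card I = s" "n \<in> I" for I
  proof
    show "UI I \<subseteq> (Einf_n n :: 'a::field sop set)"
    proof
      fix x :: "'a sop" assume "x \<in> UI I"
      then obtain c where c: "x = muI I c" "c \<noteq> 0" unfolding UI_def by blast
      have "card I \<ge> 2" using I(2) assms(2) by simp
      then show "x \<in> Einf_n n" unfolding c(1) by (rule UI_in[OF I(1) _ I(3) c(2)])
    qed
    show "(Einf_C n I :: 'a sop set) \<subseteq> Einf_n n" by (rule EinfC_sub[OF I(1) I(3)])
  qed
  have gI: "g \<in> (Einf_n n :: 'a sop set)"
    if I: "I \<subseteq> {1..n}" "card I = s" "n \<in> I" and g: "g \<in> {u \<circ> v | u v. u \<in> UI I \<and> v \<in> Einf_C n I}" for I g
  proof -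
    obtain u v where uv: "g = u \<circ> v" "u \<in> UI I" "v \<in> Einf_C n I" using g by blast
    have "u \<in> Einf_n n" "v \<in> Einf_n n" using P1[OF I] uv by auto
    then show ?thesis unfolding uv(1) Einf_n_def by (rule gen_grp_comp)
  qed
  have fold: "foldr (\<circ>) (map g L) id \<in> (Einf_n n :: 'a sop set)"
    if "\<forall>I\<in>set L. g I \<in> (Einf_n n :: 'a sop set)" for L and g :: "nat set \<Rightarrow> 'a sop"
    using that
  proof (induction L)
    case Nil
    have "(id :: 'a sop) \<in> Einf_n n" unfolding Einf_n_def by (rule gen_grp.one)
    then show ?case by (simp add: id_def)
  next
    case (Cons a L)
    have h1: "g a \<in> Einf_n n" using Cons.prems by simp
    have h2: "foldr (\<circ>) (map g L) id \<in> Einf_n n" by (rule Cons.IH) (use Cons.prems in simp)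
    have e: "foldr (\<circ>) (map g (a # L)) id = g a \<circ> foldr (\<circ>) (map g L) id" by simp
    show ?case unfolding e using h1 h2 unfolding Einf_n_def by (rule gen_grp_comp)
  qed
  show ?thesis
  proof (intro conjI allI impI)
    fix I assume "I \<subseteq> {1..n} \<and> card I = s \<and> n \<in> I"
    then have "I \<subseteq> {1..n}" "card I = s" "n \<in> I" by auto
    from P1[OF this] show "UI I \<subseteq> (Einf_n n :: 'a::field sop set)" "(Einf_C n I :: 'a sop set) \<subseteq> Einf_n n"
      by auto
  next
    fix Is :: "nat set list"
    assume Is: "distinct Is \<and> set Is = {I. I \<subseteq> {1..n} \<and> card I = s \<and> n \<in> I}"
    show "(tildeE n Is :: 'a sop set) \<subseteq> Einf_n n"
    proof
      fix x :: "'a sop" assume "x \<in> tildeE n Is"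
      then obtain g where x: "x = foldr (\<circ>) (map g Is) id"
        and g: "\<forall>I\<in>set Is. g I \<in> {u \<circ> v | u v. u \<in> UI I \<and> v \<in> Einf_C n I}"
        unfolding tildeE_def by blast
      have "\<forall>I\<in>set Is. g I \<in> (Einf_n n :: 'a sop set)"
      proof
        fix I assume I: "I \<in> set Is"
        then have I': "I \<subseteq> {1..n}" "card I = s" "n \<in> I" using Is by auto
        show "g I \<in> Einf_n n" by (rule gI[OF I']) (use g I in blast)
      qed
      then show "x \<in> Einf_n n" unfolding x by (rule fold)
    qed
  qed
qed

end
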